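(* Let $\Gamma$ be a connected $\mathbb Z$-leg-weighted graph, $w\in W(\Gamma)$ a weighting, and $\gamma$ a positive cycle for $w$. Let $\Gamma/\gamma$ be the graph obtained from $\Gamma$ by contracting every edge of $\gamma$, and $w|_{\Gamma/\gamma}$ the restricted weighting. Then $$c_w = c_{w|_{\Gamma/\gamma}}\times\{\mathbf 0\},$$ where $c_{w|_{\Gamma/\gamma}}\subseteq\mathbb Q_{\ge0}^{E(\Gamma/\gamma)}$ is the cone of the restricted weighting and $\mathbf 0$ is the zero vector of $\mathbb Q_{\ge0}^{E(\gamma)}$ (using $\mathbb Q_{\ge 0}^{E(\Gamma)}=\mathbb Q_{\ge0}^{E(\Gamma/\gamma)}\times\mathbb Q_{\ge0}^{E(\gamma)}$).
   Context: A graph consists of finite sets $V$ (vertices) and $H$ (half-edges), a map $\mathrm{end}\colon H\to V$, an involution $i$ of $H$, a genus $g\colon V\to\mathbb Z_{\ge0}$ and an integer twist $k$. Legs are fixed points of $i$; edges are pairs $\{h,i(h)\}$ with $h\neq i(h)$; a directed edge is a non-leg half-edge $h$ from $\mathrm{end}(h)$ to $\mathrm{end}(i(h))$. $\mathrm{val}(v)$ counts non-leg half-edges at $v$, $\kappa(v)=2g(v)-2+\mathrm{val}(v)$, $g(\Gamma)=b_1(\Gamma)+\sum g(v)$. A cycle is a closed walk of directed edges repeating no vertex or undirected edge. A weighting is $w\colon H\to\mathbb Z$ with $w(h)+w(i(h))=0$ for $h\ne i(h)$ and $\sum_{\mathrm{end}(h)=v}w(h)+k\kappa(v)=0$ for all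 $v$; $W(\Gamma)$ is the set of weightings with prescribed leg values (summing to $-k(2g(\Gamma)-2)$). Contracting edges (merging their endpoints, with genera of merged vertices adding up together with the first Betti number of the contracted subgraph) sends a weighting to a weighting on the contracted graph by restriction to the remaining half-edges. For a directed edge $e$ of a cycle $\gamma$, $w_\gamma(e)$ is the value of $w$ on the half-edge of $e$ at its source. $c_w\subseteq\mathbb Q_{\ge0}^{E}$ is the cone of $t$ with $\sum_{e\in\gamma}w_\gamma(e)t(e)=0$ for all cycles $\gamma$. A positive cycle for $w$ is a cycle $\gamma$ with $w_\gamma(e)>0$ for all $e\in\gamma$. *)

theory Defs
  imports Complex_Main
begin

record ('v, 'h) lgraph =
  verts  :: "'v set"
  hedges :: "'h set"
  endp   :: "'h \<Rightarrow> 'v"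
  invol  :: "'h \<Rightarrow> 'h"
  genus  :: "'v \<Rightarrow> nat"
  twist  :: int

definition wf_graph :: "('v, 'h) lgraph \<Rightarrow> bool" where
  "wf_graph G \<longleftrightarrow> finite (verts G) \<and> finite (hedges G)
     \<and> (\<forall>h\<in>hedges G. endp G h \<in> verts G)
     \<and> (\<forall>h\<in>hedges G. invol G h \<in> hedges G \<and> invol G (invol G h) = h)"

definition is_leg :: "('v, 'h) lgraph \<Rightarrow> 'h \<Rightarrow> bool" where
  "is_leg G h \<longleftrightarrow> invol G h = h"

definition edges :: "('v, 'h) lgraph \<Rightarrow> 'h set set" where
  "edges G = {{h, invol G h} | h. h \<in> hedges G \<and> invol G h \<noteq> h}"

definition val :: "('v, 'h) lgraph \<Rightarrow> 'v \<Rightarrow> nat" where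
  "val G v = card {h \<in> hedges G. endp G h = v \<and> invol G h \<noteq> h}"

definition kappa :: "('v, 'h) lgraph \<Rightarrow> 'v \<Rightarrow> int" where
  "kappa G v = 2 * int (genus G v) - 2 + int (val G v)"

definition adj :: "('v, 'h) lgraph \<Rightarrow> ('v \<times> 'v) set" where
  "adj G = {(endp G h, endp G (invol G h)) | h. h \<in> hedges G \<and> invol G h \<noteq> h}"

definition connected_graph :: "('v, 'h) lgraph \<Rightarrow> bool" where
  "connected_graph G \<longleftrightarrow> verts G \<noteq> {} \<and>
     (\<forall>u\<in>verts G. \<forall>v\<in>verts G. (u, v) \<in> (adj G)\<^sup>*)"

text \<open>Weightings (the leg values are whatever w assigns to legs; W(Gamma) fixes them).\<close>
definition is_weighting :: "('v, 'h) lgraph \<Rightarrow> ('h \<Rightarrow> int) \<Rightarrow> bool" where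
  "is_weighting G w \<longleftrightarrow>
     (\<forall>h\<in>hedges G. invol G h \<noteq> h \<longrightarrow> w h + w (invol G h) = 0) \<and>
     (\<forall>v\<in>verts G. (\<Sum>h\<in>{h\<in>hedges G. endp G h = v}. w h) + twist G * kappa G v = 0)"

definition is_cycle :: "('v, 'h) lgraph \<Rightarrow> 'h list \<Rightarrow> bool" where
  "is_cycle G c \<longleftrightarrow> c \<noteq> [] \<and>
     (\<forall>h\<in>set c. h \<in> hedges G \<and> invol G h \<noteq> h) \<and>
     (\<forall>j<length c. endp G (invol G (c ! j)) = endp G (c ! ((j + 1) mod length c))) \<and>
     distinct (map (endp G) c) \<and>
     distinct (map (\<lambda>h. {h, invol G h}) c)"

definition cycle_edges :: "('v, 'h) lgraph \<Rightarrow> 'h list \<Rightarrow> 'h set set" where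
  "cycle_edges G c = (\<lambda>h. {h, invol G h}) ` set c"

definition positive_cycle :: "('v, 'h) lgraph \<Rightarrow> ('h \<Rightarrow> int) \<Rightarrow> 'h list \<Rightarrow> bool" where
  "positive_cycle G w c \<longleftrightarrow> is_cycle G c \<and> (\<forall>h\<in>set c. w h > 0)"

text \<open>The cone c_w in Q_{>=0}^E, elements represented as functions on 'h set that vanish
  outside E. For a directed edge h of a cycle, w_gamma is the value of w at h (its source
  half-edge).\<close>
definition cone :: "('v, 'h) lgraph \<Rightarrow> ('h \<Rightarrow> int) \<Rightarrow> ('h set \<Rightarrow> rat) set" where
  "cone G w = {t. (\<forall>e\<in>edges G. t e \<ge> 0) \<and> (\<forall>e. e \<notin> edges G \<longrightarrow> t e = 0) \<and>
     (\<forall>c. is_cycle G c \<longrightarrow> (\<Sum>h\<leftarrow>c. of_int (w h) * t {h, invol G h}) = 0)}"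

text \<open>Contraction of a set S of edges: vertices are the classes of V under the equivalence
  generated by S; half-edges of S are removed; the genus of a merged vertex is the sum of the
  genera plus the first Betti number of the contracted subgraph on that class.\<close>
definition sadj :: "('v, 'h) lgraph \<Rightarrow> 'h set set \<Rightarrow> ('v \<times> 'v) set" where
  "sadj G S = {(endp G h, endp G (invol G h)) | h. h \<in> hedges G \<and> {h, invol G h} \<in> S}"

definition vclass :: "('v, 'h) lgraph \<Rightarrow> 'h set set \<Rightarrow> 'v \<Rightarrow> 'v set" where
  "vclass G S v = {u \<in> verts G. (v, u) \<in> ((sadj G S) \<union> (sadj G S)\<inverse>)\<^sup>*}"

definition contract :: "('v, 'h) lgraph \<Rightarrow> 'h set set \<Rightarrow> ('v set, 'h) lgraph" where
  "contract G S = \<lparr> verts = vclass G S ` verts G,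
     hedges = hedges G - \<Union>S,
     endp = (\<lambda>h. vclass G S (endp G h)),
     invol = invol G,
     genus = (\<lambda>C. (\<Sum>v\<in>C. genus G v) +
        nat (int (card {e\<in>S. \<exists>h\<in>e. h \<in> hedges G \<and> endp G h \<in> C}) - int (card C) + 1)),
     twist = twist G \<rparr>"

end

theory Submission
  imports Defs
begin


definition cwalk :: "('a \<Rightarrow> 'a \<Rightarrow> bool) \<Rightarrow> 'a list \<Rightarrow> bool" where
  "cwalk P xs \<longleftrightarrow> xs \<noteq> [] \<and> successively P xs \<and> P (last xs) (hd xs)"

lemma cwalk_nth:
  assumes "xs \<noteq> []"
  shows "(\<forall>j<length xs. P (xs!j) (xs!((j+1) mod length xs))) \<longleftrightarrow> cwalk P xs"
proof -
  have L: "last xs = xs ! (length xs - 1)" using assms by (simp add: last_conv_nth)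
  have Hd: "hd xs = xs ! 0" using assms by (simp add: hd_conv_nth)
  show ?thesis
  proof
    assume A: "\<forall>j<length xs. P (xs!j) (xs!((j+1) mod length xs))"
    have "successively P xs" unfolding successively_conv_nth
    proof (intro allI impI)
      fix i assume "Suc i < length xs"
      then show "P (xs ! i) (xs ! Suc i)" using A[rule_format, of i] by simp
    qed
    moreover have "P (last xs) (hd xs)"
      using A[rule_format, of "length xs - 1"] assms L Hd by simp
    ultimately show "cwalk P xs" using assms unfolding cwalk_def by blast
  next
    assume B: "cwalk P xs"
    show "\<forall>j<length xs. P (xs!j) (xs!((j+1) mod length xs))"
    proof (intro allI impI)
      fix j assume j: "j < length xs"
      show "P (xs!j) (xs!((j+1) mod length xs))"
      proof (cases "Suc j < length xs")
        case True then show ?thesis using B successively_nth[of P xs j] unfolding cwalk_def by simp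
      next
        case False
        then have "j = length xs - 1" "Suc j = length xs" using j by auto
        then have "(j+1) mod length xs = 0" by simp
        then show ?thesis using B L Hd \<open>j = length xs - 1\<close> unfolding cwalk_def by simp
      qed
    qed
  qed
qed

lemma cwalk_rotate1: "cwalk P xs \<Longrightarrow> cwalk P (rotate1 xs)"
proof (cases xs)
  case (Cons a l)
  assume A: "cwalk P xs"
  show ?thesis
  proof (cases l)
    case Nil then show ?thesis using A Cons by (simp add: cwalk_def)
  next
    case (Cons b l')
    then show ?thesis using A \<open>xs = a # l\<close>
    proof -
      have l: "l \<noteq> []" using Cons by simp
      have "successively P (a # l)" "P (last (a # l)) a" using A \<open>xs = a # l\<close> by (auto simp: cwalk_def)
      then have "successively P l" "P a (hd l)" "P (last l) a" using l by (auto simp: successively_Cons)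
      then show ?thesis using \<open>xs = a # l\<close> l
        by (simp add: cwalk_def successively_append_iff)
    qed
  qed
qed (simp add: cwalk_def)

lemma cwalk_rotate: "cwalk P xs \<Longrightarrow> cwalk P (rotate n xs)"
  by (induction n) (auto intro: cwalk_rotate1)

lemma sum_rotate: fixes f :: "'b \<Rightarrow> 'a::comm_monoid_add" shows "sum_list (map f (rotate n xs)) = sum_list (map f xs)"
proof (induction n)
  case (Suc n) then show ?case by (cases "rotate n xs") (auto simp: add.commute)
qed simp

lemma distinct_filter_rotate: "distinct (filter Q (rotate n xs)) = distinct (filter Q xs)"
proof (induction n)
  case (Suc n) then show ?case by (cases "rotate n xs") auto
qed simp

lemma rotate_to_front:
  assumes "x \<in> set xs" shows "\<exists>n r. rotate n xs = x # r"
proof -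
  obtain i where i: "i < length xs" "xs ! i = x" using assms by (auto simp: in_set_conv_nth)
  have "xs \<noteq> []" using assms by auto
  then have "hd (rotate i xs) = x" using hd_rotate_conv_nth[of xs i] i by simp
  moreover have "rotate i xs \<noteq> []" using assms by auto
  ultimately show ?thesis by (metis list.exhaust_sel)
qed

lemma successively_weaken:
  assumes "successively P xs" "\<And>x y. x \<in> set xs \<Longrightarrow> P x y \<Longrightarrow> Q y \<Longrightarrow> P' x y" "\<forall>y\<in>set (tl xs). Q y"
  shows "successively P' xs"
  using assms
proof (induction xs)
  case (Cons a xs)
  then show ?case by (cases xs) (auto simp: successively_Cons)
qed simp

lemma cyc_iff:
  "is_cycle K d \<longleftrightarrow> d \<noteq> [] \<and> (\<forall>h\<in>set d. h \<in> hedges K \<and> invol K h \<noteq> h) \<and>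
     cwalk (\<lambda>x y. endp K (invol K x) = endp K y) d \<and> distinct (map (endp K) d) \<and>
     distinct (map (\<lambda>h. {h, invol K h}) d)"
  unfolding is_cycle_def using cwalk_nth[of d "\<lambda>x y. endp K (invol K x) = endp K y"]
  by auto

lemma is_cycle_rotate: "is_cycle K d \<Longrightarrow> is_cycle K (rotate n d)"
  unfolding cyc_iff by (auto intro: cwalk_rotate simp: rotate_map[symmetric])

lemma distinct_map_gen:
  assumes "distinct (filter P ys)" "length (filter (\<lambda>y. \<not> P y) ys) \<le> 1"
    "\<forall>a\<in>set ys. \<forall>b\<in>set ys. g a = g b \<longrightarrow> (\<not>P a \<and> \<not>P b) \<or> a = b"
  shows "distinct (map g ys)"
  using assms
proof (induction ys)
  case (Cons a ys)
  have IH: "distinct (map g ys)"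
    using Cons by (auto split: if_splits)
  have "g a \<notin> g ` set ys"
  proof
    assume "g a \<in> g ` set ys"
    then obtain b where b: "b \<in> set ys" "g b = g a" by auto
    then have "(\<not>P a \<and> \<not>P b) \<or> a = b" using Cons.prems(3) by auto
    then show False
    proof
      assume "\<not>P a \<and> \<not>P b"
      then have "length (filter (\<lambda>y. \<not> P y) ys) \<ge> 1" using b(1)
        by (metis One_nat_def Suc_leI filter_empty_conv length_greater_0_conv)
      then show False using Cons.prems(2) \<open>\<not>P a \<and> \<not>P b\<close> by simp
    next
      assume "a = b"
      show False
      proof (cases "P a")
        case True then show False using Cons.prems(1) b(1) \<open>a = b\<close> by simp
      next
        case False
        then have "length (filter (\<lambda>y. \<not> P y) ys) \<ge> 1" using b(1) \<open>a = b\<close>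
          by (metis One_nat_def Suc_leI filter_empty_conv length_greater_0_conv)
        then show False using Cons.prems(2) False by simp
      qed
    qed
  qed
  then show ?case using IH by simp
qed simp




locale L =
  fixes G :: "('v, 'h) lgraph" and w :: "'h \<Rightarrow> int" and c :: "'h list"
  assumes wf: "wf_graph G" and pc: "positive_cycle G w c"
begin

definition "S = cycle_edges G c"
definition "Cv = endp G ` set c"
definition "cl = vclass G S"
definition "E h = {h, invol G h}"
definition "Rg x y \<longleftrightarrow> endp G (invol G x) = endp G y"
definition "Rc x y \<longleftrightarrow> cl (endp G (invol G x)) = cl (endp G y)"
definition "R0 = sadj G S \<union> (sadj G S)\<inverse>"

lemma cyc: "is_cycle G c" using pc unfolding positive_cycle_def by blast

lemma wf_end: "h \<in> hedges G \<Longrightarrow> endp G h \<in> verts G"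
  and wf_inv: "h \<in> hedges G \<Longrightarrow> invol G h \<in> hedges G"
  and wf_inv2: "h \<in> hedges G \<Longrightarrow> invol G (invol G h) = h"
  using wf unfolding wf_graph_def by auto

lemma c_hedges: "h \<in> set c \<Longrightarrow> h \<in> hedges G \<and> invol G h \<noteq> h"
  using cyc unfolding is_cycle_def by blast

lemma c_inv_end: assumes "h \<in> set c" shows "endp G (invol G h) \<in> Cv"
proof -
  obtain j where j: "j < length c" "c ! j = h" using assms by (auto simp: in_set_conv_nth)
  have "endp G (invol G (c ! j)) = endp G (c ! ((j + 1) mod length c))"
    using cyc j unfolding is_cycle_def by blast
  moreover have "length c > 0" using j by auto
  then have "(j + 1) mod length c < length c" by simp
  ultimately show ?thesis using j unfolding Cv_def by (metis image_eqI nth_mem)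
qed

lemma Cv_verts: "Cv \<subseteq> verts G"
  using c_hedges wf_end unfolding Cv_def by auto

lemma U_iff: assumes "h \<in> hedges G" shows "E h \<in> S \<longleftrightarrow> h \<in> \<Union>S"
proof
  assume "E h \<in> S" then show "h \<in> \<Union>S" unfolding E_def by blast
next
  assume "h \<in> \<Union>S"
  then obtain g where g: "g \<in> set c" "h \<in> {g, invol G g}" unfolding S_def cycle_edges_def by auto
  have "invol G (invol G g) = g" using g(1) c_hedges wf_inv2 by blast
  then have "E h = {g, invol G g}" using g(2) unfolding E_def by auto
  then show "E h \<in> S" using g(1) unfolding S_def cycle_edges_def by auto
qed

lemma inU_end: assumes "h \<in> \<Union>S" shows "endp G h \<in> Cv \<and> endp G (invol G h) \<in> Cv"
proof -
  obtain g where g: "g \<in> set c" "h \<in> {g, invol G g}" using assms unfolding S_def cycle_edges_def by auto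
  have "invol G (invol G g) = g" using g(1) c_hedges wf_inv2 by blast
  then show ?thesis using g c_inv_end[OF g(1)] unfolding Cv_def by auto
qed

lemma S_edges: "S \<subseteq> edges G"
  unfolding S_def cycle_edges_def edges_def using c_hedges by blast

lemma E_c: "h \<in> set c \<Longrightarrow> E h \<in> S"
  unfolding S_def cycle_edges_def E_def by auto

lemma edges_contract: "edges (contract G S) = edges G - S"
proof -
  have "edges (contract G S) = {{h, invol G h} | h. h \<in> hedges G - \<Union>S \<and> invol G h \<noteq> h}"
    unfolding edges_def contract_def by simp
  also have "\<dots> = edges G - S"
  proof safe
    fix h assume h: "h \<in> hedges G" "h \<notin> \<Union>S" "invol G h \<noteq> h"
    then show "{h, invol G h} \<in> edges G" unfolding edges_def by blast
    assume "{h, invol G h} \<in> S"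
    then show False using U_iff[OF h(1)] h(2) unfolding E_def by blast
  next
    fix e assume "e \<in> edges G" "e \<notin> S"
    then obtain h where h: "e = {h, invol G h}" "h \<in> hedges G" "invol G h \<noteq> h" unfolding edges_def by blast
    then have "h \<notin> \<Union>S" using U_iff[OF h(2)] \<open>e \<notin> S\<close> unfolding E_def by blast
    then show "\<exists>h. e = {h, invol G h} \<and> h \<in> hedges G - \<Union>S \<and> invol G h \<noteq> h" using h by blast
  qed
  finally show ?thesis .
qed

lemma R0_sub: "(x, y) \<in> R0 \<Longrightarrow> x \<in> Cv \<and> y \<in> Cv"
proof -
  have "x \<in> Cv \<and> y \<in> Cv" if xy: "(x, y) \<in> sadj G S" for x y
  proof -
    obtain h where h: "x = endp G h" "y = endp G (invol G h)" "h \<in> hedges G" "{h, invol G h} \<in> S"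
      using xy unfolding sadj_def by auto
    then have "h \<in> \<Union>S" by blast
    then show ?thesis using inU_end h by auto
  qed
  then show "(x, y) \<in> R0 \<Longrightarrow> x \<in> Cv \<and> y \<in> Cv" unfolding R0_def by blast
qed

lemma R0_conn0: "j < length c \<Longrightarrow> (endp G (c ! 0), endp G (c ! j)) \<in> R0\<^sup>*"
proof (induction j)
  case (Suc j)
  then have j: "j < length c" by simp
  have "endp G (invol G (c ! j)) = endp G (c ! ((j + 1) mod length c))"
    using cyc j unfolding is_cycle_def by blast
  then have e: "endp G (invol G (c ! j)) = endp G (c ! Suc j)" using Suc.prems by simp
  have "c ! j \<in> set c" using j by simp
  then have "(endp G (c ! j), endp G (c ! Suc j)) \<in> sadj G S"
    unfolding sadj_def using c_hedges E_c[unfolded E_def] e[symmetric] by blast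
  then have "(endp G (c ! j), endp G (c ! Suc j)) \<in> R0" unfolding R0_def by blast
  then show ?case using Suc j by (meson rtrancl.rtrancl_into_rtrancl)
qed simp

lemma R0_sym: "(x, y) \<in> R0\<^sup>* \<Longrightarrow> (y, x) \<in> R0\<^sup>*"
proof -
  assume "(x, y) \<in> R0\<^sup>*"
  then have "(y, x) \<in> (R0\<inverse>)\<^sup>*" by (rule rtrancl_converseI)
  moreover have "R0\<inverse> = R0" unfolding R0_def by auto
  ultimately show ?thesis by simp
qed

lemma R0_conn: assumes "u \<in> Cv" "v \<in> Cv" shows "(u, v) \<in> R0\<^sup>*"
proof -
  obtain p q where "p < length c" "u = endp G (c ! p)" "q < length c" "v = endp G (c ! q)"
    using assms unfolding Cv_def by (auto simp: in_set_conv_nth)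
  then show ?thesis using R0_conn0 R0_sym by (meson rtrancl_trans)
qed

lemma cl_C: assumes "v \<in> Cv" shows "cl v = Cv"
proof -
  have "cl v = {u \<in> verts G. (v, u) \<in> R0\<^sup>*}" unfolding cl_def vclass_def R0_def by simp
  also have "\<dots> = Cv"
  proof safe
    fix u assume "(v, u) \<in> R0\<^sup>*"
    then show "u \<in> Cv" using assms by (cases rule: rtranclE) (auto dest: R0_sub)
  next
    fix u assume "u \<in> Cv" then show "u \<in> verts G" using Cv_verts by blast
    show "(v, u) \<in> R0\<^sup>*" using R0_conn assms \<open>u \<in> Cv\<close> by blast
  qed
  finally show ?thesis .
qed

lemma cl_nC: assumes "v \<in> verts G" "v \<notin> Cv" shows "cl v = {v}"
proof -
  have "cl v = {u \<in> verts G. (v, u) \<in> R0\<^sup>*}" unfolding cl_def vclass_def R0_def by simp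
  also have "\<dots> = {v}"
  proof safe
    fix u assume "(v, u) \<in> R0\<^sup>*"
    then show "u = v" using assms by (cases rule: converse_rtranclE) (auto dest: R0_sub)
  qed (use assms in auto)
  finally show ?thesis .
qed

lemma cl_eqC: "v \<in> verts G \<Longrightarrow> cl v = Cv \<longleftrightarrow> v \<in> Cv"
  using cl_C cl_nC by fastforce

lemma cl_eq: "u \<in> verts G \<Longrightarrow> v \<in> verts G \<Longrightarrow> cl u = cl v \<longleftrightarrow> (u \<in> Cv \<and> v \<in> Cv) \<or> u = v"
  using cl_C cl_nC by (metis insert_iff singleton_iff)

lemma contract_simps:
  "hedges (contract G S) = hedges G - \<Union>S"
  "endp (contract G S) = (\<lambda>h. cl (endp G h))"
  "invol (contract G S) = invol G"
  unfolding contract_def cl_def by simp_all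

end



context L begin

definition "W q \<longleftrightarrow> q \<noteq> [] \<and> (\<forall>h\<in>set q. h \<in> hedges G \<and> invol G h \<noteq> h) \<and> cwalk Rc q \<and>
   distinct (map E q) \<and> distinct (filter (\<lambda>v. v \<notin> Cv) (map (endp G) q))"

lemma W_rotate: "W q \<Longrightarrow> W (rotate n q)"
  unfolding W_def
  by (auto intro: cwalk_rotate simp: rotate_map[symmetric] distinct_filter_rotate)

lemma walk_sum:
  fixes t :: "'h set \<Rightarrow> rat"
  assumes t0: "\<forall>e\<in>S. t e = 0"
    and tc: "\<forall>d. is_cycle (contract G S) d \<longrightarrow>
       (\<Sum>h\<leftarrow>d. of_int (w h) * t {h, invol (contract G S) h}) = 0"
  shows "W q \<Longrightarrow> (\<Sum>h\<leftarrow>q. of_int (w h) * t (E h)) = 0"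
proof (induction "length q" arbitrary: q rule: less_induct)
  case less
  define F where "F h = of_int (w h) * t (E h)" for h
  have Fsum: "(\<Sum>h\<leftarrow>q. of_int (w h) * t (E h)) = (\<Sum>h\<leftarrow>q. F h)" unfolding F_def by simp
  have IH: "\<And>q'. length q' < length q \<Longrightarrow> W q' \<Longrightarrow> (\<Sum>h\<leftarrow>q'. F h) = 0"
    using less.hyps unfolding F_def by blast
  have Wq: "W q" by fact
  have hv: "\<And>h. h \<in> set q \<Longrightarrow> h \<in> hedges G \<and> invol G h \<noteq> h" using Wq unfolding W_def by blast
  show ?case
  proof (cases "\<exists>h\<in>set q. h \<in> \<Union>S")
    case True
    then obtain h where h: "h \<in> set q" "h \<in> \<Union>S" by blast
    then obtain n r where nr: "rotate n q = h # r" using rotate_to_front by metis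
    have Wr0: "W (h # r)" using W_rotate[OF Wq, of n] nr by simp
    have hh: "h \<in> hedges G" using hv h(1) by blast
    have Fh: "F h = 0" unfolding F_def using t0 U_iff[OF hh] h(2) by simp
    have "(\<Sum>h\<leftarrow>q. F h) = (\<Sum>h\<leftarrow>rotate n q. F h)" by (simp add: sum_rotate)
    also have "\<dots> = (\<Sum>h\<leftarrow>r. F h)" using nr Fh by simp
    also have "\<dots> = 0"
    proof (cases "r = []")
      case False
      have lr: "length r < length q" using nr by (metis length_Cons length_rotate lessI)
      have cw: "successively Rc (h # r)" "Rc (last (h # r)) h" using Wr0 unfolding W_def cwalk_def by auto
      then have s1: "successively Rc r" "Rc h (hd r)" using False by (auto simp: successively_Cons)
      have lastin: "last r \<in> set r" "hd r \<in> set r" using False by auto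
      then have hl: "last r \<in> hedges G" "hd r \<in> hedges G" using Wr0 unfolding W_def by auto
      have e1: "endp G h \<in> Cv" "endp G (invol G h) \<in> Cv" using inU_end h(2) by auto
      have "cl (endp G (invol G (last r))) = Cv"
        using cw(2) False e1 cl_C unfolding Rc_def by auto
      moreover have "cl (endp G (hd r)) = Cv"
        using s1(2) e1 cl_C unfolding Rc_def by auto
      ultimately have "Rc (last r) (hd r)" unfolding Rc_def by simp
      then have "W r" using Wr0 s1 False unfolding W_def cwalk_def by (auto split: if_splits)
      then show ?thesis using IH lr by blast
    qed simp
    finally show ?thesis using Fsum by simp
  next
    case noU: False
    let ?P = "\<lambda>v. v \<notin> Cv"
    show ?thesis
    proof (cases "length (filter (\<lambda>v. v \<in> Cv) (map (endp G) q)) \<le> 1")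
      case True
      have d1: "distinct (map cl (map (endp G) q))"
      proof (rule distinct_map_gen[where P = ?P])
        show "distinct (filter ?P (map (endp G) q))" using Wq unfolding W_def by blast
        show "length (filter (\<lambda>y. \<not> ?P y) (map (endp G) q)) \<le> 1" using True by simp
        show "\<forall>a\<in>set (map (endp G) q). \<forall>b\<in>set (map (endp G) q). cl a = cl b \<longrightarrow> \<not> ?P a \<and> \<not> ?P b \<or> a = b"
          using hv wf_end cl_eq by fastforce
      qed
      have "is_cycle (contract G S) q"
        unfolding cyc_iff contract_simps
        using Wq noU d1 unfolding W_def E_def Rc_def by (auto simp: comp_def)
      then have "(\<Sum>h\<leftarrow>q. of_int (w h) * t {h, invol (contract G S) h}) = 0" using tc by blast
      then show ?thesis unfolding contract_simps E_def by simp
    next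
      case False
      let ?A = "{i. i < length q \<and> endp G (q ! i) \<in> Cv}"
      have "length (filter (\<lambda>v. v \<in> Cv) (map (endp G) q)) = card ?A"
        by (auto simp: length_filter_conv_card intro!: arg_cong[where f=card])
      then have cA: "card ?A \<ge> 2" using False by simp
      then have "?A \<noteq> {}" by (metis card.empty not_numeral_le_zero)
      then obtain i0 where i0: "i0 \<in> ?A" by blast
      have "card (?A - {i0}) \<ge> 1" using cA i0 by (simp add: card_Diff_singleton)
      then have "?A - {i0} \<noteq> {}" by (metis card.empty not_one_le_zero)
      then obtain j0 where j0: "j0 \<in> ?A" "j0 \<noteq> i0" by blast
      define i where "i = min i0 j0"
      define j where "j = max i0 j0"
      have ij: "i < j" "j < length q" "endp G (q ! i) \<in> Cv" "endp G (q ! j) \<in> Cv"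
        using i0 j0 unfolding i_def j_def by (auto simp: min_def max_def)
      define q' where "q' = rotate i q"
      define k where "k = j - i"
      have Wq': "W q'" unfolding q'_def using W_rotate[OF Wq] .
      have lq': "length q' = length q" unfolding q'_def by simp
      have k: "0 < k" "k < length q'" unfolding k_def using ij lq' by auto
      have qne: "q \<noteq> []" using ij by auto
      have q'ne: "q' \<noteq> []" using k by (metis length_greater_0_conv order.strict_trans)
      have q0: "q' ! 0 = q ! i" unfolding q'_def using nth_rotate[of 0 q i] ij qne by simp
      have qk: "q' ! k = q ! j" unfolding q'_def k_def using nth_rotate[of "j - i" q i] ij by simp
      have inq: "set q' = set q" unfolding q'_def by simp
      have ver: "\<And>h. h \<in> set q' \<Longrightarrow> endp G h \<in> verts G \<and> endp G (invol G h) \<in> verts G"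
        using hv wf_end wf_inv inq by blast
      have clk: "cl (endp G (q' ! k)) = Cv" "cl (endp G (q' ! 0)) = Cv"
        using qk q0 ij cl_C by auto
      define A where "A = take k q'"
      define B where "B = drop k q'"
      have AB: "q' = A @ B" unfolding A_def B_def by simp
      have Ane: "A \<noteq> []" and Bne: "B \<noteq> []" unfolding A_def B_def using k by auto
      have succ: "successively Rc q'" "Rc (last q') (hd q')" using Wq' unfolding W_def cwalk_def by auto
      then have sAB: "successively Rc A" "successively Rc B" using AB successively_append_iff by metis+
      have lastA: "last A = q' ! (k - 1)"
      proof -
        have "take k q' \<noteq> []" using k by (auto simp: take_eq_Nil)
        then have "last (take k q') = take k q' ! (length (take k q') - 1)" by (rule last_conv_nth)
        then show ?thesis unfolding A_def using k by simp
      qed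
      have hdA: "hd A = q' ! 0" unfolding A_def using k q'ne by (simp add: hd_conv_nth)
      have lastB: "last B = last q'" unfolding B_def using k by simp
      have hdB: "hd B = q' ! k" unfolding B_def using k by (simp add: hd_drop_conv_nth)
      have hdq: "hd q' = q' ! 0" using k q'ne by (simp add: hd_conv_nth)
      have "Rc (q' ! (k - 1)) (q' ! k)" using successively_nth[OF succ(1), of "k - 1"] k by simp
      then have cA: "Rc (last A) (hd A)" using lastA hdA clk unfolding Rc_def by simp
      have cB: "Rc (last B) (hd B)" using succ(2) lastB hdB hdq clk unfolding Rc_def by simp
      have dist: "distinct (map E A)" "distinct (map E B)"
        "distinct (filter ?P (map (endp G) A))" "distinct (filter ?P (map (endp G) B))"
        using Wq' AB unfolding W_def by (metis distinct_append filter_append map_append)+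
      have sub: "set A \<subseteq> set q'" "set B \<subseteq> set q'" using AB by auto
      have hq': "\<forall>h\<in>set q'. h \<in> hedges G \<and> invol G h \<noteq> h" using Wq' unfolding W_def by blast
      have WA: "W A" unfolding W_def cwalk_def using Ane sAB(1) cA dist(1,3) sub(1) hq' by blast
      have WB: "W B" unfolding W_def cwalk_def using Bne sAB(2) cB dist(2,4) sub(2) hq' by blast
      have lAB: "length A < length q" "length B < length q" unfolding A_def B_def using k lq' by auto
      have "(\<Sum>h\<leftarrow>q. F h) = (\<Sum>h\<leftarrow>q'. F h)" unfolding q'_def by (simp add: sum_rotate)
      also have "\<dots> = (\<Sum>h\<leftarrow>A. F h) + (\<Sum>h\<leftarrow>B. F h)" using AB by simp
      also have "\<dots> = 0" using IH[OF lAB(1) WA] IH[OF lAB(2) WB] by simp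
      finally show ?thesis using Fsum by simp
    qed
  qed
qed

end



context L begin

lemma contract_cycle_facts:
  assumes "is_cycle (contract G S) d"
  shows "d \<noteq> []" "\<forall>h\<in>set d. h \<in> hedges G \<and> h \<notin> \<Union>S \<and> invol G h \<noteq> h"
    "cwalk Rc d" "distinct (map (\<lambda>h. cl (endp G h)) d)" "distinct (map E d)"
  using assms unfolding cyc_iff contract_simps Rc_def E_def by auto

lemma lift_sum:
  fixes t :: "'h set \<Rightarrow> rat"
  assumes t0: "\<forall>e\<in>S. t e = 0"
    and tg: "\<forall>d. is_cycle G d \<longrightarrow> (\<Sum>h\<leftarrow>d. of_int (w h) * t {h, invol G h}) = 0"
    and dc: "is_cycle (contract G S) d0"
  shows "(\<Sum>h\<leftarrow>d0. of_int (w h) * t {h, invol (contract G S) h}) = 0"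
proof -
  define F where "F h = of_int (w h) * t (E h)" for h
  have tgF: "\<And>d. is_cycle G d \<Longrightarrow> (\<Sum>h\<leftarrow>d. F h) = 0" using tg unfolding F_def E_def by blast
  have goal: "(\<Sum>h\<leftarrow>d0. of_int (w h) * t {h, invol (contract G S) h}) = (\<Sum>h\<leftarrow>d0. F h)"
    unfolding F_def E_def contract_simps by simp
  note f0 = contract_cycle_facts[OF dc]
  have RcRg: "\<And>x y. x \<in> hedges G \<Longrightarrow> y \<in> hedges G \<Longrightarrow> endp G y \<notin> Cv \<Longrightarrow> Rc x y \<Longrightarrow> Rg x y"
    unfolding Rc_def Rg_def using cl_eq wf_end wf_inv by blast
  show ?thesis
  proof (cases "\<exists>h\<in>set d0. endp G h \<in> Cv")
    case False
    have "cwalk Rg d0"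
    proof -
      have s: "successively Rc d0" "Rc (last d0) (hd d0)" using f0(3) unfolding cwalk_def by auto
      have tl: "\<forall>y\<in>set (tl d0). y \<in> set d0" by (cases d0) auto
      have "successively Rg d0"
        by (rule successively_weaken[OF s(1) _ tl]) (use RcRg f0(2) False in auto)
      moreover have "Rg (last d0) (hd d0)" using RcRg s(2) f0(1,2) False by auto
      ultimately show ?thesis using f0(1) unfolding cwalk_def by blast
    qed
    moreover have "distinct (map (endp G) d0)"
    proof -
      have "distinct (map cl (map (endp G) d0))" using f0(4) by (simp add: comp_def)
      then show ?thesis using distinct_map[of cl "map (endp G) d0"] by blast
    qed
    ultimately have "is_cycle G d0" unfolding cyc_iff using f0(1,2,5) unfolding Rg_def E_def by auto
    then show ?thesis using goal tgF by simp
  next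
    case True
    then obtain h0 where h0: "h0 \<in> set d0" "endp G h0 \<in> Cv" by blast
    then obtain n r where nr: "rotate n d0 = h0 # r" using rotate_to_front[OF h0(1)] by blast
    define d where "d = h0 # r"
    have dc': "is_cycle (contract G S) d" unfolding d_def using is_cycle_rotate[OF dc, of n] nr by simp
    have sd: "(\<Sum>h\<leftarrow>d0. F h) = (\<Sum>h\<leftarrow>d. F h)" unfolding d_def using nr sum_rotate[of F n d0] by simp
    note f = contract_cycle_facts[OF dc']
    have hd_hedges: "\<And>h. h \<in> set d \<Longrightarrow> h \<in> hedges G" using f(2) by blast
    have rnC: "\<And>x. x \<in> set r \<Longrightarrow> endp G x \<notin> Cv"
    proof
      fix x assume x: "x \<in> set r" "endp G x \<in> Cv"
      have "cl (endp G h0) = Cv" "cl (endp G x) = Cv" using h0 x cl_C by auto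
      then show False using f(4) x(1) unfolding d_def by auto
    qed
    define a where "a = endp G (invol G (last d))"
    define b where "b = endp G h0"
    have lastd: "last d \<in> set d" unfolding d_def by simp
    have av: "a \<in> verts G" unfolding a_def using lastd hd_hedges wf_inv wf_end by blast
    have "Rc (last d) (hd d)" using f(3) unfolding cwalk_def by blast
    then have "cl a = Cv" unfolding Rc_def a_def d_def using h0 cl_C by simp
    then have aC: "a \<in> Cv" using cl_eqC av by blast
    then obtain p where p: "p < length c" "a = endp G (c ! p)" unfolding Cv_def by (auto simp: in_set_conv_nth)
    define c' where "c' = rotate p c"
    have cc': "is_cycle G c'" unfolding c'_def using is_cycle_rotate[OF cyc] .
    have cne: "c \<noteq> []" using p by auto
    have lc': "length c' = length c" unfolding c'_def by simp
    have c'0: "c' ! 0 = c ! p" unfolding c'_def using nth_rotate[of 0 c p] p cne by simp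
    have setc': "set c' = set c" unfolding c'_def by simp
    have "b \<in> endp G ` set c'" using h0 setc' unfolding b_def Cv_def by simp
    then obtain l where l: "l < length c'" "b = endp G (c' ! l)" by (auto simp: in_set_conv_nth)
    define path where "path = take l c'"
    define e where "e = d @ path"
    have pathc: "set path \<subseteq> set c" unfolding path_def using setc' set_take_subset[of l c'] by simp
    have pathC: "\<And>h. h \<in> set path \<Longrightarrow> endp G h \<in> Cv" using pathc unfolding Cv_def by auto
    have cwc': "successively Rg c'" "Rg (last c') (hd c')" "distinct (map (endp G) c')" "distinct (map E c')"
      using cc' unfolding cyc_iff cwalk_def Rg_def E_def by auto
    have c'split: "c' = path @ drop l c'" unfolding path_def by simp
    have dne: "d \<noteq> []" unfolding d_def by simp
    have "cwalk Rg e"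
    proof -
      have s: "successively Rc d" using f(3) unfolding cwalk_def by auto
      have sd: "successively Rg d"
        by (rule successively_weaken[OF s, where Q = "\<lambda>y. y \<in> set r"])
           (use RcRg hd_hedges rnC in \<open>auto simp: d_def\<close>)
      have "successively Rg (path @ drop l c')" using cwc'(1) c'split by simp
      then have sp: "successively Rg path" by (simp add: successively_append_iff)
      have junc: "path \<noteq> [] \<Longrightarrow> Rg (last d) (hd path)"
      proof -
        assume pne: "path \<noteq> []"
        then have "l > 0" unfolding path_def by auto
        have "c' \<noteq> []" using l by auto
        then have "hd path = c' ! 0" unfolding path_def using l \<open>l > 0\<close> by (simp add: hd_conv_nth take_eq_Nil)
        then show ?thesis unfolding Rg_def using a_def p c'0 by simp
      qed
      have close: "Rg (last e) (hd e)"
      proof (cases "path = []")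
        case True
        then have "l = 0" unfolding path_def using l by (auto simp: take_eq_Nil)
        then have "a = b" using l c'0 p by simp
        then show ?thesis using True unfolding e_def Rg_def a_def b_def d_def by simp
      next
        case False
        then have l0: "l > 0" unfolding path_def by auto
        have "last path = c' ! (l - 1)"
        proof -
          have "last path = path ! (length path - 1)" using False by (rule last_conv_nth)
          then show ?thesis unfolding path_def using l l0 by simp
        qed
        moreover have "Rg (c' ! (l - 1)) (c' ! l)" using successively_nth[OF cwc'(1), of "l - 1"] l l0 by simp
        ultimately show ?thesis using False l unfolding e_def Rg_def b_def d_def by simp
      qed
      have "successively Rg e" unfolding e_def successively_append_iff using sd sp junc by blast
      then show ?thesis using close using dne unfolding cwalk_def e_def by simp
    qed
    moreover have "distinct (map (endp G) e)"
    proof -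
      have dr: "distinct (map (endp G) r)"
      proof -
        have "distinct (map cl (map (endp G) r))" using f(4) unfolding d_def by (simp add: comp_def)
        then show ?thesis using distinct_map[of cl "map (endp G) r"] by blast
      qed
      have "b \<notin> endp G ` set r" using rnC h0 unfolding b_def by auto
      then have dd: "distinct (map (endp G) d)" using dr unfolding d_def b_def by simp
      have dpd: "distinct (map (endp G) (path @ drop l c'))" using cwc'(3) c'split by simp
      then have dp: "distinct (map (endp G) path)" by simp
      have "drop l c' ! 0 = c' ! l" "0 < length (drop l c')" using l by auto
      then have "c' ! l \<in> set (drop l c')" by (metis nth_mem)
      then have "b \<in> endp G ` set (drop l c')" using l(2) by blast
      then have "b \<notin> endp G ` set path" using dpd by auto
      then have "set (map (endp G) d) \<inter> set (map (endp G) path) = {}"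
        unfolding d_def b_def
      proof (auto)
        fix x y assume "x \<in> set r" "y \<in> set path" "endp G x = endp G y"
        then show False using rnC[of x] pathC[of y] by simp
      qed
      then show ?thesis unfolding e_def using dd dp by simp
    qed
    moreover have "distinct (map E e)"
    proof -
      have dpd: "distinct (map E (path @ drop l c'))" using cwc'(4) c'split by simp
      then have dp: "distinct (map E path)" by simp
      have "E ` set path \<subseteq> S" using pathc E_c by auto
      moreover have "E ` set d \<inter> S = {}" using f(2) U_iff by blast
      ultimately show ?thesis unfolding e_def using f(5) dp by auto
    qed
    moreover have "\<forall>h\<in>set e. h \<in> hedges G \<and> invol G h \<noteq> h"
      unfolding e_def using f(2) pathc c_hedges by auto
    ultimately have "is_cycle G e" unfolding cyc_iff using dne unfolding e_def Rg_def E_def by auto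
    then have "(\<Sum>h\<leftarrow>e. F h) = 0" by (rule tgF)
    moreover have "(\<Sum>h\<leftarrow>path. F h) = 0"
    proof -
      have "\<forall>h\<in>set path. F h = 0" using pathc E_c t0 unfolding F_def by auto
      then show ?thesis using sum_list_nonneg_eq_0_iff[of "map F path"] by auto
    qed
    ultimately have "(\<Sum>h\<leftarrow>d. F h) = 0" unfolding e_def by simp
    then show ?thesis using goal sd by simp
  qed
qed

end



context L begin

lemma Gcyc_W: assumes "is_cycle G d" shows "W d"
proof -
  have f: "d \<noteq> []" "\<forall>h\<in>set d. h \<in> hedges G \<and> invol G h \<noteq> h" "cwalk Rg d"
    "distinct (map (endp G) d)" "distinct (map E d)"
    using assms unfolding cyc_iff Rg_def E_def by auto
  have tl: "\<forall>y\<in>set (tl d). True" by simp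
  have s: "successively Rg d" "Rg (last d) (hd d)" using f(3) unfolding cwalk_def by auto
  have "successively Rc d"
    by (rule successively_weaken[OF s(1) _ tl]) (auto simp: Rg_def Rc_def)
  moreover have "Rc (last d) (hd d)" using s(2) by (simp add: Rg_def Rc_def)
  ultimately show ?thesis unfolding W_def cwalk_def using f by (simp add: distinct_filter)
qed

end

theorem lemma3p10:
  fixes G :: "('v, 'h) lgraph" and w :: "'h \<Rightarrow> int" and c :: "'h list"
  assumes "wf_graph G" and "connected_graph G"
    and "is_weighting G w"
    and "positive_cycle G w c"
  shows "cone G w =
    (\<lambda>(s, z) e. if e \<in> cycle_edges G c then z e else s e) `
      (cone (contract G (cycle_edges G c)) w \<times> {\<lambda>_. 0})"
proof -
  interpret L G w c using assms(1,4) by unfold_locales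
  have SS: "cycle_edges G c = S" unfolding S_def by simp
  show ?thesis unfolding SS
  proof (intro equalityI subsetI)
    fix t assume t: "t \<in> cone G w"
    have tnn: "\<And>e. e \<in> edges G \<Longrightarrow> t e \<ge> 0" and tout: "\<And>e. e \<notin> edges G \<Longrightarrow> t e = 0"
      and tg: "\<forall>d. is_cycle G d \<longrightarrow> (\<Sum>h\<leftarrow>d. of_int (w h) * t {h, invol G h}) = 0"
      using t unfolding cone_def by auto
    have t0: "\<forall>e\<in>S. t e = 0"
    proof
      fix e assume "e \<in> S"
      then obtain h where h: "h \<in> set c" "e = E h" unfolding S_def cycle_edges_def E_def by auto
      have pos: "\<And>g. g \<in> set c \<Longrightarrow> w g > 0" using pc unfolding positive_cycle_def by blast
      have Eed: "\<And>g. g \<in> set c \<Longrightarrow> E g \<in> edges G" using E_c S_edges by blast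
      have "(\<Sum>g\<leftarrow>c. of_int (w g) * t (E g)) = 0" using tg cyc unfolding E_def by blast
      moreover have "\<And>x. x \<in> set (map (\<lambda>g. of_int (w g) * t (E g)) c) \<Longrightarrow> 0 \<le> x"
        using pos Eed tnn by auto (metis less_imp_le of_int_0_le_iff mult_nonneg_nonneg)
      ultimately have "\<forall>x\<in>set (map (\<lambda>g. of_int (w g) * t (E g)) c). x = 0"
        using sum_list_nonneg_eq_0_iff by blast
      then have "of_int (w h) * t (E h) = 0" using h(1) by auto
      then show "t e = 0" using pos[OF h(1)] h(2) by simp
    qed
    have "t \<in> cone (contract G S) w"
      unfolding cone_def edges_contract mem_Collect_eq
    proof (intro conjI allI impI ballI)
      fix e assume "e \<in> edges G - S" then show "0 \<le> t e" using tnn by blast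
    next
      fix e assume "e \<notin> edges G - S" then show "t e = 0" using tout t0 by blast
    next
      fix d assume "is_cycle (contract G S) d"
      then show "(\<Sum>h\<leftarrow>d. of_int (w h) * t {h, invol (contract G S) h}) = 0"
        using lift_sum[OF t0 tg] by blast
    qed
    moreover have "t = (\<lambda>(s, z) e. if e \<in> S then z e else s e) (t, \<lambda>_. 0)"
      using t0 by (auto simp: fun_eq_iff)
    ultimately show "t \<in> (\<lambda>(s, z) e. if e \<in> S then z e else s e) ` (cone (contract G S) w \<times> {\<lambda>_. 0})"
      by blast
  next
    fix x assume "x \<in> (\<lambda>(s, z) e. if e \<in> S then z e else s e) ` (cone (contract G S) w \<times> {\<lambda>_. 0})"
    then obtain s where s: "s \<in> cone (contract G S) w" and xs: "x = (\<lambda>(s, z) e. if e \<in> S then z e else s e) (s, \<lambda>_. 0)"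
      by blast
    define t where "t = (\<lambda>e. if e \<in> S then 0 else s e)"
    have snn: "\<And>e. e \<in> edges G - S \<Longrightarrow> s e \<ge> 0" and sout: "\<And>e. e \<notin> edges G - S \<Longrightarrow> s e = 0"
      and sc: "\<forall>d. is_cycle (contract G S) d \<longrightarrow> (\<Sum>h\<leftarrow>d. of_int (w h) * s {h, invol (contract G S) h}) = 0"
      using s unfolding cone_def edges_contract by auto
    have t0: "\<forall>e\<in>S. t e = 0" unfolding t_def by simp
    have tc: "\<forall>d. is_cycle (contract G S) d \<longrightarrow>
       (\<Sum>h\<leftarrow>d. of_int (w h) * t {h, invol (contract G S) h}) = 0"
    proof (intro allI impI)
      fix d assume d: "is_cycle (contract G S) d"
      note f = contract_cycle_facts[OF d]
      have "map (\<lambda>h. of_int (w h) * t {h, invol (contract G S) h}) d =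
            map (\<lambda>h. of_int (w h) * s {h, invol (contract G S) h}) d"
      proof (rule map_cong[OF refl])
        fix h assume "h \<in> set d"
        then have "E h \<notin> S" using f(2) U_iff by blast
        then show "of_int (w h) * t {h, invol (contract G S) h} = of_int (w h) * s {h, invol (contract G S) h}"
          unfolding t_def E_def contract_simps by simp
      qed
      then have "(\<Sum>h\<leftarrow>d. of_int (w h) * t {h, invol (contract G S) h}) =
         (\<Sum>h\<leftarrow>d. of_int (w h) * s {h, invol (contract G S) h})" by (rule arg_cong)
      then show "(\<Sum>h\<leftarrow>d. of_int (w h) * t {h, invol (contract G S) h}) = 0" using sc d by simp
    qed
    have "t \<in> cone G w"
      unfolding cone_def mem_Collect_eq
    proof (intro conjI allI impI ballI)
      fix e assume "e \<in> edges G" then show "0 \<le> t e" unfolding t_def using snn by auto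
    next
      fix e assume "e \<notin> edges G" then show "t e = 0" unfolding t_def using sout S_edges by auto
    next
      fix d assume "is_cycle G d"
      then have "(\<Sum>h\<leftarrow>d. of_int (w h) * t (E h)) = 0" using walk_sum[OF t0 tc] Gcyc_W by blast
      then show "(\<Sum>h\<leftarrow>d. of_int (w h) * t {h, invol G h}) = 0" unfolding E_def .
    qed
    moreover have "x = t" unfolding xs t_def by simp
    ultimately show "x \<in> cone G w" by simp
  qed
qed


end
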